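(* Let $d,b\ge1$ with $M=2^b<d$, $\varepsilon>0$, and let $k\in\{1,\dots,M\}$. Let $A$ be a uniformly (Haar) distributed $d\times d$ orthogonal matrix. The normalization constant $r_k$, i.e. the value $r>0$ for which the $k$-closest encoding with codebook $(rAs_1,\dots,rAs_M)$ is unbiased, is $$r_k=\frac{ke^\varepsilon+M-k}{e^\varepsilon-1}\sqrt{\frac{M-1}{M}}\,\frac{1}{C_k},$$ where $C_k=\mathbb{E}\big[\text{sum of the }k\text{ largest among }a_1,\dots,a_M\big]$ for $a=(a_1,\dots,a_d)$ uniformly distributed on $\mathbb{S}^{d-1}$.
   Context: $\mathbb{S}^{d-1}$ is the unit sphere in $\mathbb{R}^d$. The simplex vectors $s_1,\dots,s_M\in\mathbb{R}^d$ are $(s_i)_j=\frac{M-1}{\sqrt{M(M-1)}}$ if $j=i$, $(s_i)_j=-\frac{1}{\sqrt{M(M-1)}}$ if $j\ne i$, $j\le M$, and $(s_i)_j=0$ if $j>M$. For a shared random codebook $U^M=(U_1,\dots,U_M)$, the $k$-closest encoding of $v\in\mathbb{S}^{d-1}$ (integer $k$) outputs message $m\in\{1,\dots,M\}$ with probability $\frac{e^\varepsilon}{ke^\varepsilon+M-k}$ if $\|v-U_m\|^2$ is among the $k$ smallest of $\|v-U_1\|^2,\dots,\|v-U_M\|^2$ and $\frac{1}{ke^\varepsilon+M-k}$ otherwise; the server decodes $m$ as $U_m$. The scheme is unbiased if $\mathbb{E}[\sum_{m=1}^M U_m\Pr(m\mid v,U^M)]=v$ for all $v\in\mathbb{S}^{d-1}$.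 *)

theory Defs
  imports "HOL-Analysis.Analysis" "HOL-Probability.Probability"
begin

text \<open>Haar (uniform) probability distribution on the orthogonal group O(d), d = CARD('n):
  the Borel probability measure concentrated on orthogonal matrices that is invariant under
  left multiplication by every orthogonal matrix (this characterises Haar measure uniquely).\<close>
definition haar_orthogonal :: "(real^'n^'n) measure \<Rightarrow> bool" where
  "haar_orthogonal \<mu> \<longleftrightarrow>
     prob_space \<mu> \<and> sets \<mu> = sets borel \<and>
     emeasure \<mu> {A. orthogonal_matrix A} = 1 \<and>
     (\<forall>Q. orthogonal_matrix Q \<longrightarrow> distr \<mu> borel (\<lambda>A. Q ** A) = \<mu>)"

definition uniform_sphere :: "(real^'n) measure \<Rightarrow> bool" where
  "uniform_sphere \<nu> \<longleftrightarrow>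
     prob_space \<nu> \<and> sets \<nu> = sets borel \<and>
     emeasure \<nu> (sphere 0 1) = 1 \<and>
     (\<forall>Q. orthogonal_matrix Q \<longrightarrow> distr \<nu> borel (\<lambda>x. Q *v x) = \<nu>)"

text \<open>Simplex vectors s_0,...,s_{M-1} (0-indexed); the coordinates 1..M of the paper are the
  coordinates \<sigma> 0, ..., \<sigma> (M-1) of the index type.\<close>
definition simplex_vec :: "nat \<Rightarrow> (nat \<Rightarrow> 'n) \<Rightarrow> nat \<Rightarrow> real^'n" where
  "simplex_vec M \<sigma> i = (\<chi> j. if j \<in> \<sigma> ` {..<M} then
       (if j = \<sigma> i then (real M - 1) / sqrt (real M * (real M - 1))
        else - 1 / sqrt (real M * (real M - 1)))
     else 0)"

text \<open>Probability that the k-closest encoding of v with codebook U_0..U_{M-1} outputs m.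
  "Among the k smallest" = fewer than k codewords are strictly closer.\<close>
definition kclosest_prob ::
  "real \<Rightarrow> nat \<Rightarrow> nat \<Rightarrow> (nat \<Rightarrow> real^'n) \<Rightarrow> real^'n \<Rightarrow> nat \<Rightarrow> real" where
  "kclosest_prob \<epsilon> k M U v m =
     (if card {j\<in>{..<M}. (norm (v - U j))\<^sup>2 < (norm (v - U m))\<^sup>2} < k
      then exp \<epsilon> / (real k * exp \<epsilon> + real M - real k)
      else 1 / (real k * exp \<epsilon> + real M - real k))"

definition kclosest_unbiased ::
  "real \<Rightarrow> nat \<Rightarrow> nat \<Rightarrow> 'a measure \<Rightarrow> ('a \<Rightarrow> nat \<Rightarrow> real^'n) \<Rightarrow> bool" where
  "kclosest_unbiased \<epsilon> k M \<mu> U \<longleftrightarrow>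
     (\<forall>v::real^'n. norm v = 1 \<longrightarrow>
        integral\<^sup>L \<mu> (\<lambda>A. \<Sum>m<M. kclosest_prob \<epsilon> k M (U A) v m *\<^sub>R U A m) = v)"

definition topk_sum :: "nat \<Rightarrow> nat \<Rightarrow> (nat \<Rightarrow> real) \<Rightarrow> real" where
  "topk_sum k M f = Max {sum f S | S. S \<subseteq> {..<M} \<and> card S = k}"

end

theory Submission
  imports Defs
begin

lemma orth_norm:
  fixes Q :: "real^'n^'n"
  assumes "orthogonal_matrix Q" shows "norm (Q *v x) = norm x"
proof -
  have "orthogonal_transformation (\<lambda>x. Q *v x)"
    using assms by (simp add: orthogonal_transformation_matrix)
  then show ?thesis by (simp add: orthogonal_transformation)
qed

lemma orth_inv:
  fixes Q :: "real^'n^'n"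
  assumes "orthogonal_matrix Q" shows "transpose Q *v (Q *v x) = x"
  using assms unfolding orthogonal_matrix_def
  by (metis matrix_vector_mul_assoc matrix_vector_mul_lid transpose_matrix_vector)

lemma orth_inv2:
  fixes Q :: "real^'n^'n"
  assumes "orthogonal_matrix Q" shows "Q *v (transpose Q *v x) = x"
  using orth_inv[of "transpose Q" x] assms by simp

lemma inner_mat:
  fixes A :: "real^'n^'n"
  shows "inner x (A *v y) = inner (transpose A *v x) y"
  by (simp add: dot_lmul_matrix)

lemma orth_inner:
  fixes Q :: "real^'n^'n"
  assumes "orthogonal_matrix Q" shows "inner (Q *v x) (Q *v y) = inner x y"
  by (metis assms inner_mat orth_inv)

lemma topk_lemma:
  fixes f :: "nat \<Rightarrow> real"
  assumes inj: "inj_on f {..<M}" and kM: "k \<le> M"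
  defines "T \<equiv> {m\<in>{..<M}. card {j\<in>{..<M}. f m < f j} < k}"
  shows "card T = k \<and> topk_sum k M f = sum f T"
proof -
  define rk where "rk m = card {j\<in>{..<M}. f m < f j}" for m
  have rk_lt: "rk m < M" if "m < M" for m
  proof -
    have "{j\<in>{..<M}. f m < f j} \<subseteq> {..<M} - {m}" by auto
    then have "rk m \<le> card ({..<M} - {m})" unfolding rk_def by (intro card_mono) auto
    then show ?thesis using that by simp
  qed
  have rk_less: "rk m' < rk m" if "m < M" "m' < M" "f m < f m'" for m m'
  proof -
    have "{j\<in>{..<M}. f m' < f j} \<subset> {j\<in>{..<M}. f m < f j}"
      using that by auto
    then show ?thesis unfolding rk_def by (intro psubset_card_mono) auto
  qed
  have rk_inj: "inj_on rk {..<M}"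
  proof (rule inj_onI)
    fix m m' assume "m \<in> {..<M}" "m' \<in> {..<M}" "rk m = rk m'"
    then show "m = m'"
      using rk_less[of m m'] rk_less[of m' m] inj
      by (metis inj_onD lessThan_iff linorder_neqE_linordered_idom less_irrefl)
  qed
  have rk_img: "rk ` {..<M} = {..<M}"
    using rk_lt rk_inj by (intro endo_inj_surj) auto
  have TT: "T = {m\<in>{..<M}. rk m < k}" unfolding T_def rk_def by simp
  have "rk ` T = {..<k}"
  proof
    show "rk ` T \<subseteq> {..<k}" unfolding TT by auto
    show "{..<k} \<subseteq> rk ` T"
    proof
      fix i assume "i \<in> {..<k}"
      then have "i \<in> rk ` {..<M}" using rk_img kM by auto
      then obtain m where "m < M" "rk m = i" by auto
      then show "i \<in> rk ` T" using \<open>i \<in> {..<k}\<close> unfolding TT by auto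
    qed
  qed
  moreover have "inj_on rk T" using rk_inj unfolding TT by (rule inj_on_subset) auto
  ultimately have cardT: "card T = k" by (metis card_image card_lessThan)
  have upper: "f m' < f m" if "m \<in> T" "m' < M" "m' \<notin> T" for m m'
  proof -
    have mM: "m < M" using that unfolding TT by auto
    have "f m \<noteq> f m'" using inj that mM by (metis inj_onD lessThan_iff)
    moreover have "\<not> f m < f m'"
    proof
      assume "f m < f m'"
      then have "rk m' < rk m" using rk_less mM that by auto
      then show False using that unfolding TT by auto
    qed
    ultimately show ?thesis by auto
  qed
  have Tsub: "T \<subseteq> {..<M}" unfolding TT by auto
  have best: "sum f S \<le> sum f T" if S: "S \<subseteq> {..<M}" "card S = k" for S
  proof -
    have fin: "finite S" "finite T" using S Tsub finite_subset by auto
    have cS: "card (S - T) = card (T - S)"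
    proof -
      have "card (S - T) = card S - card (S \<inter> T)" using fin by (metis card_Diff_subset_Int finite_Int)
      moreover have "card (T - S) = card T - card (T \<inter> S)" using fin by (metis card_Diff_subset_Int finite_Int)
      ultimately show ?thesis using cardT S by (simp add: Int_commute)
    qed
    have eS: "sum f S = sum f (S \<inter> T) + sum f (S - T)"
      using fin by (metis Int_Diff_Un Int_commute sum.union_disjoint finite_Int finite_Diff Int_Diff_disjoint)
    have eT: "sum f T = sum f (S \<inter> T) + sum f (T - S)"
      using fin by (metis Int_Diff_Un Int_Diff_disjoint Int_commute finite_Diff finite_Int sum.union_disjoint)
    show ?thesis
    proof (cases "T - S = {}")
      case True
      then have "card (S - T) = 0" using cS by (metis card.empty)
      then have "S - T = {}" using fin by simp
      then show ?thesis using eS eT True by simp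
    next
      case False
      define t where "t = Min (f ` (T - S))"
      have t1: "t \<le> f y" if "y \<in> T - S" for y unfolding t_def using fin that by auto
      have "t \<in> f ` (T - S)" unfolding t_def using fin False by (intro Min_in) auto
      then obtain y0 where y0: "y0 \<in> T - S" "t = f y0" by auto
      have t2: "f x \<le> t" if "x \<in> S - T" for x
        using upper[of y0 x] y0 that S by auto
      have "sum f (S - T) \<le> of_nat (card (S - T)) * t" using t2 by (intro sum_bounded_above) auto
      also have "\<dots> = of_nat (card (T - S)) * t" using cS by simp
      also have "\<dots> \<le> sum f (T - S)" using t1 by (intro sum_bounded_below) auto
      finally show ?thesis using eS eT by simp
    qed
  qed
  have "topk_sum k M f = sum f T"
    unfolding topk_sum_def
  proof (rule Max_eqI)
    have "{sum f S |S. S \<subseteq> {..<M} \<and> card S = k} \<subseteq> (sum f) ` Pow {..<M}" by auto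
    then show "finite {sum f S |S. S \<subseteq> {..<M} \<and> card S = k}" by (rule finite_subset) auto
    show "y \<le> sum f T" if "y \<in> {sum f S |S. S \<subseteq> {..<M} \<and> card S = k}" for y
      using that best by auto
    show "sum f T \<in> {sum f S |S. S \<subseteq> {..<M} \<and> card S = k}" using Tsub cardT by auto
  qed
  then show ?thesis using cardT by simp
qed

lemma sum_two_special:
  fixes g :: "'n::finite \<Rightarrow> real"
  assumes "a \<noteq> l"
  shows "(\<Sum>i\<in>UNIV. g i) = g a + g l + (\<Sum>i\<in>UNIV - {a, l}. g i)"
proof -
  have "(\<Sum>i\<in>UNIV. g i) = g a + (\<Sum>i\<in>UNIV - {a}. g i)"
    by (simp add: sum.remove)
  also have "(\<Sum>i\<in>UNIV - {a}. g i) = g l + (\<Sum>i\<in>UNIV - {a} - {l}. g i)"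
    using assms by (intro sum.remove) auto
  finally show ?thesis by (simp add: Diff_insert2[symmetric] insert_commute)
qed

lemma rot_exists:
  fixes a l :: "'n::finite"
  assumes al: "a \<noteq> l" and cs: "c\<^sup>2 + s\<^sup>2 = 1"
  obtains Q :: "real^'n^'n" where "orthogonal_matrix Q"
    "\<And>w. Q *v w = (\<chi> i. if i = a then c*w$a - s*w$l else if i = l then s*w$a + c*w$l else w$i)"
proof -
  define f :: "real^'n \<Rightarrow> real^'n" where
    "f w = (\<chi> i. if i = a then c*w$a - s*w$l else if i = l then s*w$a + c*w$l else w$i)" for w
  have lin: "linear f"
    by (rule linearI) (auto simp: f_def vec_eq_iff algebra_simps)
  have nrm: "norm (f w) = norm w" for w
  proof -
    have "inner (f w) (f w) = inner w w"
    proof -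
      have "inner (f w) (f w) = (\<Sum>i\<in>UNIV. f w $ i * f w $ i)" by (simp add: inner_vec_def)
      also have "\<dots> = f w $ a * f w $ a + f w $ l * f w $ l + (\<Sum>i\<in>UNIV - {a, l}. f w $ i * f w $ i)"
        by (rule sum_two_special[OF al])
      also have "(\<Sum>i\<in>UNIV - {a, l}. f w $ i * f w $ i) = (\<Sum>i\<in>UNIV - {a, l}. w $ i * w $ i)"
        by (intro sum.cong) (auto simp: f_def)
      also have "f w $ a * f w $ a + f w $ l * f w $ l = w $ a * w $ a + w $ l * w $ l"
      proof -
        have "f w $ a * f w $ a + f w $ l * f w $ l = (c\<^sup>2 + s\<^sup>2) * (w $ a * w $ a + w $ l * w $ l)"
          using al by (simp add: f_def power2_eq_square algebra_simps)
        then show ?thesis using cs by simp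
      qed
      also have "w $ a * w $ a + w $ l * w $ l + (\<Sum>i\<in>UNIV - {a, l}. w $ i * w $ i) = inner w w"
        using sum_two_special[OF al, of "\<lambda>i. w $ i * w $ i"] by (simp add: inner_vec_def)
      finally show ?thesis .
    qed
    then show ?thesis by (simp add: norm_eq_sqrt_inner)
  qed
  have ot: "orthogonal_transformation f" using lin nrm by (simp add: orthogonal_transformation)
  show ?thesis
  proof
    show "orthogonal_matrix (matrix f)" using ot orthogonal_transformation_matrix by blast
    show "matrix f *v w = (\<chi> i. if i = a then c*w$a - s*w$l else if i = l then s*w$a + c*w$l else w$i)" for w
    proof -
      have lin': "Vector_Spaces.linear (*s) (*s) f" using lin by (simp add: linear_def scalar_mult_eq_scaleR)
      show ?thesis using matrix_works[OF lin'] f_def by simp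
    qed
  qed
qed

lemma disjoint_const_zero:
  assumes "prob_space N" "\<And>t::nat. Y t \<in> sets N" "disjoint_family Y" "\<And>t. measure N (Y t) = c"
  shows "c = 0"
proof -
  interpret prob_space N by fact
  have "(\<lambda>t. measure N (Y t)) sums measure N (\<Union>t. Y t)"
    using assms by (intro finite_measure_UNION) auto
  then have "summable (\<lambda>t. c)" using assms(4) by (simp add: sums_summable)
  then have "(\<lambda>t. c) \<longlonglongrightarrow> 0" by (rule summable_LIMSEQ_zero)
  then show ?thesis by (simp add: LIMSEQ_const_iff)
qed

lemma us_basic:
  assumes "uniform_sphere \<nu>"
  shows "prob_space \<nu>" "sets \<nu> = sets borel" "space \<nu> = UNIV" "emeasure \<nu> (sphere 0 1) = 1"
    "\<And>Q. orthogonal_matrix Q \<Longrightarrow> distr \<nu> borel (\<lambda>x. Q *v x) = \<nu>"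
  using assms unfolding uniform_sphere_def
  by (auto dest: sets_eq_imp_space_eq)

lemma meas_borel_cong:
  assumes "sets N = sets borel" "f \<in> borel_measurable borel"
  shows "f \<in> borel_measurable N"
  using assms measurable_cong_sets by blast

lemma us_measure_inv:
  fixes \<nu> :: "(real^'n) measure"
  assumes "uniform_sphere \<nu>" "orthogonal_matrix Q" "B \<in> sets borel"
  shows "measure \<nu> {w. Q *v w \<in> B} = measure \<nu> B"
proof -
  note b = us_basic[OF assms(1)]
  have m: "(\<lambda>x. Q *v x) \<in> measurable \<nu> borel"
    by (rule meas_borel_cong[OF b(2)]) (intro borel_measurable_continuous_onI continuous_intros)
  have "measure \<nu> B = measure (distr \<nu> borel (\<lambda>x. Q *v x)) B" using b(5)[OF assms(2)] by simp
  also have "\<dots> = measure \<nu> ((\<lambda>x. Q *v x) -` B \<inter> space \<nu>)" by (rule measure_distr[OF m assms(3)])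
  finally show ?thesis using b(3) by (simp add: vimage_def)
qed

definition Zset :: "'n set \<Rightarrow> (real^'n) set" where
  "Zset J = {w. \<forall>j\<in>J. w$j = 0}"

lemma closed_Zset: "closed (Zset J)"
proof -
  have "Zset J = (\<Inter>j\<in>J. {w. w$j = 0})" unfolding Zset_def by auto
  moreover have "closed {w::real^'n. w$j = 0}" for j
    by (intro closed_Collect_eq continuous_intros)
  ultimately show ?thesis by auto
qed

lemma Zset_borel: "Zset J \<in> sets borel" using closed_Zset by (rule borel_closed)

lemma rot_measure:
  fixes \<nu> :: "(real^'n) measure"
  assumes "uniform_sphere \<nu>" "a \<in> J" "l \<notin> J"
  shows "measure \<nu> {w. (\<forall>j\<in>J-{a}. w$j = 0) \<and> w$a = t * w$l} = measure \<nu> (Zset J)"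
proof -
  define c where "c = 1 / sqrt (1 + t\<^sup>2)"
  define s where "s = t * c"
  have cpos: "c > 0" unfolding c_def by (simp add: add_pos_nonneg)
  have "c\<^sup>2 = 1 / (1 + t\<^sup>2)" unfolding c_def by (simp add: power_divide add_nonneg_nonneg)
  moreover have "1 + t\<^sup>2 > 0" by (simp add: add_pos_nonneg)
  ultimately have cs: "c\<^sup>2 + s\<^sup>2 = 1" unfolding s_def by (simp add: power_mult_distrib divide_simps) (simp add: algebra_simps)
  have al: "a \<noteq> l" using assms by auto
  obtain Q :: "real^'n^'n" where Q: "orthogonal_matrix Q"
    "\<And>w. Q *v w = (\<chi> i. if i = a then c*w$a - s*w$l else if i = l then s*w$a + c*w$l else w$i)"
    using rot_exists[OF al cs] by blast
  have "{w. Q *v w \<in> Zset J} = {w. (\<forall>j\<in>J-{a}. w$j = 0) \<and> w$a = t * w$l}"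
  proof -
    have "Q *v w \<in> Zset J \<longleftrightarrow> (\<forall>j\<in>J-{a}. w$j = 0) \<and> w$a = t * w$l" for w
    proof -
      have e1: "(Q *v w)$j = w$j" if "j \<in> J - {a}" for j using that assms Q(2) by auto
      have e2: "(Q *v w)$a = c * (w$a - t * w$l)" using Q(2) by (simp add: s_def algebra_simps)
      have "Q *v w \<in> Zset J \<longleftrightarrow> (\<forall>j\<in>J-{a}. (Q *v w)$j = 0) \<and> (Q *v w)$a = 0"
        unfolding Zset_def using assms by auto
      also have "\<dots> \<longleftrightarrow> (\<forall>j\<in>J-{a}. w$j = 0) \<and> w$a = t * w$l"
        using e1 e2 cpos by auto
      finally show ?thesis .
    qed
    then show ?thesis by auto
  qed
  then show ?thesis using us_measure_inv[OF assms(1) Q(1) Zset_borel, of J] by simp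
qed

lemma Zset_null:
  fixes \<nu> :: "(real^'n) measure"
  assumes us: "uniform_sphere \<nu>"
  shows "J \<noteq> {} \<Longrightarrow> measure \<nu> (Zset J) = 0"
proof -
  note b = us_basic[OF us]
  interpret prob_space \<nu> by (rule b(1))
  have sb: "Zset K \<in> sets \<nu>" for K using Zset_borel b(2) by auto
  have "\<forall>J. J \<noteq> {} \<longrightarrow> card (UNIV - J) = n \<longrightarrow> measure \<nu> (Zset J) = 0" for n
  proof (induction n)
    case 0
    show ?case
    proof (intro allI impI)
      fix J :: "'n set" assume "J \<noteq> {}" "card (UNIV - J) = 0"
      then have "J = UNIV" by auto
      then have "Zset J = {0}" unfolding Zset_def by (auto simp: vec_eq_iff)
      also have "{0} \<subseteq> space \<nu> - sphere 0 1" using b(3) by auto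
      finally have sub: "Zset J \<subseteq> space \<nu> - sphere 0 1" .
      have sph: "sphere (0::real^'n) 1 \<in> sets \<nu>" using b(2) by (simp add: borel_closed)
      have "prob (sphere 0 1) = 1" using b(4) by (simp add: emeasure_eq_measure)
      then have "prob (space \<nu> - sphere 0 1) = 0" using prob_compl[OF sph] by simp
      then show "measure \<nu> (Zset J) = 0"
      proof -
        have "space \<nu> - sphere 0 1 \<in> sets \<nu>" using sph by auto
        then have "measure \<nu> (Zset J) \<le> 0" using finite_measure_mono[OF sub] \<open>prob (space \<nu> - sphere 0 1) = 0\<close> by simp
        then show ?thesis using measure_nonneg[of \<nu> "Zset J"] by linarith
      qed
    qed
  next
    case (Suc n)
    show ?case
    proof (intro allI impI)
      fix J :: "'n set" assume J: "J \<noteq> {}" "card (UNIV - J) = Suc n"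
      have "UNIV - J \<noteq> {}" using J(2) by (metis card.empty nat.distinct(1))
      then obtain l where l: "l \<notin> J" by auto
      obtain a where a: "a \<in> J" using J by auto
      have "UNIV - insert l J = (UNIV - J) - {l}" by auto
      then have "card (UNIV - insert l J) = n" using J(2) l by (simp add: card_Diff_singleton)
      then have null: "measure \<nu> (Zset (insert l J)) = 0" using Suc.IH[rule_format, of "insert l J"] by simp
      then have nullset: "Zset (insert l J) \<in> null_sets \<nu>" using sb by (simp add: emeasure_eq_measure null_sets_def)
      define Y where "Y t = {w. (\<forall>j\<in>J-{a}. w$j = 0) \<and> w$a = real t * w$l} - Zset (insert l J)" for t :: nat
      have Ysets: "{w. (\<forall>j\<in>J-{a}. w$j = 0) \<and> w$a = real t * w$l} \<in> sets \<nu>" for t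
      proof -
        have "{w. (\<forall>j\<in>J-{a}. w$j = 0) \<and> w$a = real t * w$l} = {w. (\<forall>j\<in>J-{a}. w$j = 0)} \<inter> {w. w$a = real t * w$l}" by auto
        moreover have "closed {w::real^'n. (\<forall>j\<in>J-{a}. w$j = 0)}" using closed_Zset[of "J - {a}"] unfolding Zset_def .
        moreover have "closed {w::real^'n. w$a = real t * w$l}" by (intro closed_Collect_eq continuous_intros)
        ultimately show ?thesis using b(2) by (simp add: borel_closed closed_Int)
      qed
      have mY: "measure \<nu> (Y t) = measure \<nu> (Zset J)" for t
        unfolding Y_def using measure_Diff_null_set[OF Ysets nullset] rot_measure[OF us a l, of "real t"] by simp
      have disj: "disjoint_family Y"
        unfolding disjoint_family_on_def
      proof (intro ballI impI)
        fix t t' :: nat assume "t \<noteq> t'"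
        show "Y t \<inter> Y t' = {}"
        proof (rule ccontr)
          assume "Y t \<inter> Y t' \<noteq> {}"
          then obtain w where w: "w \<in> Y t" "w \<in> Y t'" by auto
          then have "real t * w$l = real t' * w$l" unfolding Y_def by auto
          then have "w$l = 0" using \<open>t \<noteq> t'\<close> by auto
          then have "w \<in> Zset (insert l J)" using w unfolding Y_def Zset_def by auto
          then show False using w unfolding Y_def by auto
        qed
      qed
      have "\<And>t. Y t \<in> sets \<nu>" unfolding Y_def using Ysets sb by auto
      then show "measure \<nu> (Zset J) = 0"
        using disjoint_const_zero[OF b(1) _ disj mY] by blast
    qed
  qed
  then show "J \<noteq> {} \<Longrightarrow> measure \<nu> (Zset J) = 0" by blast
qed

lemma tie_null:
  fixes \<nu> :: "(real^'n) measure"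
  assumes us: "uniform_sphere \<nu>" and ab: "a \<noteq> b"
  shows "AE w in \<nu>. w$a \<noteq> w$b"
proof -
  note bb = us_basic[OF us]
  interpret prob_space \<nu> by (rule bb(1))
  have "measure \<nu> {w. (\<forall>j\<in>{a}-{a}. w$j = 0) \<and> w$a = 1 * w$b} = measure \<nu> (Zset {a})"
    using rot_measure[OF us, of a "{a}" b 1] ab by simp
  also have "\<dots> = 0" using Zset_null[OF us] by simp
  finally have m0: "measure \<nu> {w. w$a = w$b} = 0" by simp
  have cl: "closed {w::real^'n. w$a = w$b}" by (intro closed_Collect_eq continuous_intros)
  then have "{w. w$a = w$b} \<in> sets \<nu>" using bb(2) by (simp add: borel_closed)
  then have "{w. w$a = w$b} \<in> null_sets \<nu>"
    using m0 by (simp add: null_sets_def emeasure_eq_measure)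
  then show ?thesis by (rule AE_I') auto
qed

lemma haar_basic:
  fixes \<mu> :: "(real^'n^'n) measure"
  assumes "haar_orthogonal \<mu>"
  shows "prob_space \<mu>" "sets \<mu> = sets borel" "space \<mu> = UNIV"
    "AE A in \<mu>. orthogonal_matrix A"
    "\<And>Q. orthogonal_matrix Q \<Longrightarrow> distr \<mu> borel (\<lambda>A. Q ** A) = \<mu>"
proof -
  show p: "prob_space \<mu>" "sets \<mu> = sets borel" "space \<mu> = UNIV"
    "\<And>Q. orthogonal_matrix Q \<Longrightarrow> distr \<mu> borel (\<lambda>A. Q ** A) = \<mu>"
    using assms unfolding haar_orthogonal_def by (auto dest: sets_eq_imp_space_eq)
  interpret prob_space \<mu> by (rule p(1))
  have "emeasure \<mu> {A. orthogonal_matrix A} = 1" using assms unfolding haar_orthogonal_def by auto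
  then have "prob {A. orthogonal_matrix A} = 1" by (simp add: emeasure_eq_measure)
  then have "AE A in \<mu>. A \<in> {A. orthogonal_matrix A}" by (rule AE_prob_1)
  then show "AE A in \<mu>. orthogonal_matrix A" by simp
qed

lemma cont_vmul: "continuous_on UNIV (\<lambda>p::(real^'n^'n) \<times> (real^'n). snd p v* fst p)"
  unfolding vector_matrix_mult_def by (intro continuous_intros)

lemma cont_mmul: "continuous_on UNIV (\<lambda>A::real^'n^'n. Q ** A)"
  unfolding matrix_matrix_mult_def by (intro continuous_intros)

lemma cont_vmul1: "continuous_on UNIV (\<lambda>A::real^'n^'n. x v* A)"
  unfolding vector_matrix_mult_def by (intro continuous_intros)

lemma exists_orth_map:
  fixes x v :: "real^'n"
  assumes "norm x = 1" "norm v = 1"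
  obtains Q :: "real^'n^'n" where "orthogonal_matrix Q" "Q *v x = v"
proof -
  obtain f where f: "orthogonal_transformation f" "f x = v"
    using orthogonal_transformation_exists_1[OF assms] by blast
  have lin: "linear f" using f(1) by (simp add: orthogonal_transformation)
  have lin': "Vector_Spaces.linear (*s) (*s) f" using lin by (simp add: linear_def scalar_mult_eq_scaleR)
  show ?thesis
  proof
    show "orthogonal_matrix (matrix f)" using f(1) orthogonal_transformation_matrix by blast
    show "matrix f *v x = v" using matrix_works[OF lin'] f(2) by simp
  qed
qed

lemma transfer:
  fixes \<mu> :: "(real^'n^'n) measure" and \<nu> :: "(real^'n) measure" and \<psi> :: "real^'n \<Rightarrow> real"
  assumes hm: "haar_orthogonal \<mu>" and us: "uniform_sphere \<nu>"
    and psim: "\<psi> \<in> borel_measurable borel" and bnd: "\<And>w. \<bar>\<psi> w\<bar> \<le> B" and v: "norm v = 1"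
  shows "(\<integral>A. \<psi> (v v* A) \<partial>\<mu>) = integral\<^sup>L \<nu> \<psi>"
proof -
  note hb = haar_basic[OF hm]
  note ub = us_basic[OF us]
  interpret P: pair_prob_space \<mu> \<nu>
    using hb(1) ub(1) by (simp add: pair_prob_space_def pair_sigma_finite_def prob_space_imp_sigma_finite)
  define f where "f A x = \<psi> (x v* A)" for A :: "real^'n^'n" and x :: "real^'n"
  have sp: "sets (\<mu> \<Otimes>\<^sub>M \<nu>) = sets (borel \<Otimes>\<^sub>M borel)"
    using hb(2) ub(2) by (intro sets_pair_measure_cong)
  have meas: "case_prod f \<in> borel_measurable (\<mu> \<Otimes>\<^sub>M \<nu>)"
  proof -
    have "(\<lambda>p::(real^'n^'n) \<times> (real^'n). snd p v* fst p) \<in> borel_measurable borel"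
      by (rule borel_measurable_continuous_onI[OF cont_vmul])
    then have "(\<lambda>p. \<psi> (snd p v* fst p)) \<in> borel_measurable (borel :: ((real^'n^'n) \<times> (real^'n)) measure)"
      using psim by (rule measurable_compose)
    then have "(\<lambda>p. \<psi> (snd p v* fst p)) \<in> borel_measurable (borel \<Otimes>\<^sub>M borel :: ((real^'n^'n) \<times> (real^'n)) measure)"
      by (simp add: borel_prod)
    then show ?thesis using sp unfolding f_def
      by (subst measurable_cong_sets[OF sp refl]) (simp add: case_prod_beta')
  qed
  have meas': "(\<lambda>(x, A). f A x) \<in> borel_measurable (\<nu> \<Otimes>\<^sub>M \<mu>)"
    using meas measurable_pair_swap_iff[of "\<lambda>(x, A). f A x" \<nu> \<mu> borel] by simp
  have int: "integrable (\<mu> \<Otimes>\<^sub>M \<nu>) (case_prod f)"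
    using meas bnd by (intro P.P.integrable_const_bound[where B=B]) (auto simp: f_def)
  have fub: "(\<integral>x. (\<integral>A. f A x \<partial>\<mu>) \<partial>\<nu>) = (\<integral>A. (\<integral>x. f A x \<partial>\<nu>) \<partial>\<mu>)"
    by (rule P.Fubini_integral[OF int])
  define c where "c = (\<integral>A. \<psi> (v v* A) \<partial>\<mu>)"
  have inner1: "(\<integral>A. f A x \<partial>\<mu>) = c" if x: "norm x = 1" for x
  proof -
    obtain Q where Q: "orthogonal_matrix Q" "Q *v x = v" using exists_orth_map[OF x v] by blast
    have xv: "v v* Q = x" using Q orth_inv[OF Q(1), of x] by simp
    have mQ: "(\<lambda>A. Q ** A) \<in> measurable \<mu> borel"
      by (rule meas_borel_cong[OF hb(2)]) (rule borel_measurable_continuous_onI[OF cont_mmul])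
    have mpsi: "(\<lambda>A. \<psi> (v v* A)) \<in> borel_measurable borel"
      using borel_measurable_continuous_onI[OF cont_vmul1] psim by (rule measurable_compose)
    have "c = integral\<^sup>L (distr \<mu> borel (\<lambda>A. Q ** A)) (\<lambda>A. \<psi> (v v* A))"
      unfolding c_def using hb(5)[OF Q(1)] by simp
    also have "\<dots> = (\<integral>A. \<psi> (v v* (Q ** A)) \<partial>\<mu>)"
      by (rule integral_distr[OF mQ mpsi])
    also have "\<dots> = (\<integral>A. f A x \<partial>\<mu>)"
      unfolding f_def by (simp add: vector_matrix_mul_assoc[symmetric] xv)
    finally show ?thesis by simp
  qed
  have ae_sph: "AE x in \<nu>. norm x = 1"
  proof -
    have "measure \<nu> (sphere 0 1) = 1" using ub(4) by (simp add: P.M2.emeasure_eq_measure)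
    then have "AE x in \<nu>. x \<in> sphere 0 1" by (rule P.M2.AE_prob_1)
    then show ?thesis by simp
  qed
  have lhs: "(\<integral>x. (\<integral>A. f A x \<partial>\<mu>) \<partial>\<nu>) = c"
  proof -
    have "(\<integral>x. (\<integral>A. f A x \<partial>\<mu>) \<partial>\<nu>) = (\<integral>x. c \<partial>\<nu>)"
      using ae_sph inner1 by (intro integral_cong_AE) (auto intro!: P.M1.borel_measurable_lebesgue_integral meas')
    then show ?thesis using P.M2.prob_space by simp
  qed
  have inner2: "(\<integral>x. f A x \<partial>\<nu>) = integral\<^sup>L \<nu> \<psi>" if A: "orthogonal_matrix A" for A
  proof -
    have mA: "(\<lambda>x. transpose A *v x) \<in> measurable \<nu> borel"
      by (rule meas_borel_cong[OF ub(2)]) (intro borel_measurable_continuous_onI continuous_intros)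
    have "integral\<^sup>L \<nu> \<psi> = integral\<^sup>L (distr \<nu> borel (\<lambda>x. transpose A *v x)) \<psi>"
      using ub(5)[of "transpose A"] A by simp
    also have "\<dots> = (\<integral>x. \<psi> (transpose A *v x) \<partial>\<nu>)" by (rule integral_distr[OF mA psim])
    finally show ?thesis unfolding f_def by simp
  qed
  have rhs: "(\<integral>A. (\<integral>x. f A x \<partial>\<nu>) \<partial>\<mu>) = integral\<^sup>L \<nu> \<psi>"
  proof -
    have "(\<integral>A. (\<integral>x. f A x \<partial>\<nu>) \<partial>\<mu>) = (\<integral>A. integral\<^sup>L \<nu> \<psi> \<partial>\<mu>)"
      using hb(4) inner2 by (intro integral_cong_AE) (auto intro!: P.M2.borel_measurable_lebesgue_integral meas)
    then show ?thesis using P.M1.prob_space by simp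
  qed
  show ?thesis using fub lhs rhs c_def by simp
qed

definition swf :: "nat \<Rightarrow> (nat \<Rightarrow> 'n) \<Rightarrow> real^'n \<Rightarrow> real" where
  "swf M \<sigma> w = (\<Sum>l<M. w $ \<sigma> l)"

lemma simplex_comp:
  assumes inj: "inj_on \<sigma> {..<M}" and i: "i < M" and l: "l < M"
  shows "simplex_vec M \<sigma> i $ \<sigma> l = (if l = i then (real M - 1) / sqrt (real M * (real M - 1))
      else - 1 / sqrt (real M * (real M - 1)))"
  using inj i l unfolding simplex_vec_def by (auto dest: inj_onD)

lemma simplex_inner:
  fixes w :: "real^'n"
  assumes inj: "inj_on \<sigma> {..<M}" and i: "i < M"
  shows "inner w (simplex_vec M \<sigma> i) = (real M * w $ \<sigma> i - swf M \<sigma> w) / sqrt (real M * (real M - 1))"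
proof -
  define q where "q = sqrt (real M * (real M - 1))"
  define g where "g j = (if j = \<sigma> i then (real M - 1) / q else - 1 / q)" for j
  have "inner w (simplex_vec M \<sigma> i) = (\<Sum>j\<in>UNIV. if j \<in> \<sigma> ` {..<M} then w $ j * g j else 0)"
    unfolding inner_vec_def simplex_vec_def g_def q_def by (intro sum.cong) auto
  also have "\<dots> = (\<Sum>j\<in>\<sigma> ` {..<M}. w $ j * g j)"
    by (simp add: sum.If_cases Int_absorb1)
  also have "\<dots> = (\<Sum>l<M. w $ \<sigma> l * g (\<sigma> l))"
    by (subst sum.reindex[OF inj]) simp
  also have "\<dots> = (\<Sum>l<M. w $ \<sigma> l * (- 1 / q) + (if l = i then w $ \<sigma> i * (real M / q) else 0))"
  proof (intro sum.cong refl)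
    fix l assume "l \<in> {..<M}"
    then have "(\<sigma> l = \<sigma> i) = (l = i)" using inj i by (auto dest: inj_onD)
    then show "w $ \<sigma> l * g (\<sigma> l) = w $ \<sigma> l * (- 1 / q) + (if l = i then w $ \<sigma> i * (real M / q) else 0)"
      unfolding g_def by (auto simp: add_divide_distrib[symmetric] algebra_simps)
  qed
  also have "\<dots> = (\<Sum>l<M. w $ \<sigma> l * (- 1 / q)) + (\<Sum>l<M. if l = i then w $ \<sigma> i * (real M / q) else 0)"
    by (rule sum.distrib)
  also have "\<dots> = (\<Sum>l<M. w $ \<sigma> l) * (- 1 / q) + w $ \<sigma> i * (real M / q)"
    using i by (simp add: sum_distrib_right sum_divide_distrib sum_negf)
  also have "\<dots> = (real M * w $ \<sigma> i - swf M \<sigma> w) / q"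
    unfolding swf_def by (simp add: diff_divide_distrib)
  finally show ?thesis unfolding q_def .
qed

lemma simplex_swf:
  assumes inj: "inj_on \<sigma> {..<M}" and i: "i < M"
  shows "swf M \<sigma> (simplex_vec M \<sigma> i) = 0"
proof -
  define q where "q = sqrt (real M * (real M - 1))"
  have "swf M \<sigma> (simplex_vec M \<sigma> i) = (\<Sum>l<M. - 1 / q + (if l = i then real M / q else 0))"
    unfolding swf_def using simplex_comp[OF inj i] by (intro sum.cong) (auto simp: q_def add_divide_distrib[symmetric] algebra_simps)
  also have "\<dots> = (\<Sum>l<M. - 1 / q) + (\<Sum>l<M. if l = i then real M / q else 0)"
    by (rule sum.distrib)
  also have "\<dots> = 0" using i by simp
  finally show ?thesis .
qed

lemma simplex_norm:
  assumes inj: "inj_on \<sigma> {..<M}" and i: "i < M" and M2: "M \<ge> 2"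
  shows "norm (simplex_vec M \<sigma> i) = 1"
proof -
  define q where "q = sqrt (real M * (real M - 1))"
  have qpos: "q > 0" unfolding q_def using M2 by simp
  have qq: "q * q = real M * (real M - 1)" unfolding q_def using M2 by simp
  have "inner (simplex_vec M \<sigma> i) (simplex_vec M \<sigma> i) = real M * ((real M - 1) / q) / q"
    using simplex_inner[OF inj i, of "simplex_vec M \<sigma> i"] simplex_swf[OF inj i] simplex_comp[OF inj i i]
    by (simp add: q_def)
  also have "\<dots> = 1" using qq qpos by (simp add: field_simps)
  finally show ?thesis by (simp add: norm_eq_sqrt_inner)
qed

definition hval :: "real \<Rightarrow> nat \<Rightarrow> nat \<Rightarrow> (nat \<Rightarrow> 'n) \<Rightarrow> real^'n \<Rightarrow> nat \<Rightarrow> real" where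
  "hval \<epsilon> k M \<sigma> w m = (if card {j\<in>{..<M}. w $ \<sigma> m < w $ \<sigma> j} < k
      then exp \<epsilon> / (real k * exp \<epsilon> + real M - real k)
      else 1 / (real k * exp \<epsilon> + real M - real k))"

lemma dist_formula:
  fixes A :: "real^'n^'n"
  assumes A: "orthogonal_matrix A" and v: "norm v = 1" and sn: "norm s = 1"
  shows "(norm (v - r *\<^sub>R (A *v s)))\<^sup>2 = 1 + r\<^sup>2 - 2 * r * inner (v v* A) s"
proof -
  have n: "norm (A *v s) = 1" using orth_norm[OF A] sn by simp
  have "(norm (v - r *\<^sub>R (A *v s)))\<^sup>2 = inner (v - r *\<^sub>R (A *v s)) (v - r *\<^sub>R (A *v s))"
    by (rule power2_norm_eq_inner)
  also have "\<dots> = inner v v - 2 * r * inner v (A *v s) + r\<^sup>2 * inner (A *v s) (A *v s)"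
    by (simp add: inner_diff_left inner_diff_right inner_commute power2_eq_square algebra_simps)
  also have "\<dots> = 1 + r\<^sup>2 - 2 * r * inner (v v* A) s"
    using n v by (simp add: dot_lmul_matrix power2_norm_eq_inner[symmetric])
  finally show ?thesis .
qed

lemma quad_less:
  fixes r x y :: real
  assumes "r > 0"
  shows "(1 + r\<^sup>2 - 2 * r * x < 1 + r\<^sup>2 - 2 * r * y) = (y < x)"
proof -
  have "(1 + r\<^sup>2 - 2 * r * x < 1 + r\<^sup>2 - 2 * r * y) = ((2 * r) * y < (2 * r) * x)" by linarith
  also have "\<dots> = (y < x)" using assms by (intro mult_less_cancel_left_pos) simp
  finally show ?thesis .
qed

lemma kprob_eq:
  fixes A :: "real^'n^'n"
  assumes A: "orthogonal_matrix A" and v: "norm v = 1" and r: "r > 0"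
    and inj: "inj_on \<sigma> {..<M}" and M2: "M \<ge> 2" and m: "m < M"
  shows "kclosest_prob \<epsilon> k M (\<lambda>j. r *\<^sub>R (A *v simplex_vec M \<sigma> j)) v m = hval \<epsilon> k M \<sigma> (v v* A) m"
proof -
  define w where "w = v v* A"
  define q where "q = sqrt (real M * (real M - 1))"
  have qpos: "q > 0" unfolding q_def using M2 by simp
  have d: "(norm (v - r *\<^sub>R (A *v simplex_vec M \<sigma> j)))\<^sup>2 =
      1 + r\<^sup>2 - 2 * r * ((real M * w $ \<sigma> j - swf M \<sigma> w) / q)" if "j < M" for j
    using dist_formula[OF A v simplex_norm[OF inj that M2], of r] simplex_inner[OF inj that, of w]
    unfolding w_def q_def by simp
  have "{j\<in>{..<M}. (norm (v - r *\<^sub>R (A *v simplex_vec M \<sigma> j)))\<^sup>2 < (norm (v - r *\<^sub>R (A *v simplex_vec M \<sigma> m)))\<^sup>2}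
      = {j\<in>{..<M}. w $ \<sigma> m < w $ \<sigma> j}"
  proof (intro Collect_cong conj_cong refl)
    fix j assume "j \<in> {..<M}"
    then have j: "j < M" by simp
    have "(norm (v - r *\<^sub>R (A *v simplex_vec M \<sigma> j)))\<^sup>2 < (norm (v - r *\<^sub>R (A *v simplex_vec M \<sigma> m)))\<^sup>2
        \<longleftrightarrow> (real M * w $ \<sigma> m - swf M \<sigma> w) / q < (real M * w $ \<sigma> j - swf M \<sigma> w) / q"
      unfolding d[OF j] d[OF m] using r by (rule quad_less)
    also have "\<dots> \<longleftrightarrow> real M * w $ \<sigma> m - swf M \<sigma> w < real M * w $ \<sigma> j - swf M \<sigma> w"
      using qpos by (simp add: divide_less_cancel)
    also have "\<dots> \<longleftrightarrow> real M * w $ \<sigma> m < real M * w $ \<sigma> j" by linarith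
    also have "\<dots> \<longleftrightarrow> w $ \<sigma> m < w $ \<sigma> j"
      using M2 by (intro mult_less_cancel_left_pos) simp
    finally show "((norm (v - r *\<^sub>R (A *v simplex_vec M \<sigma> j)))\<^sup>2 < (norm (v - r *\<^sub>R (A *v simplex_vec M \<sigma> m)))\<^sup>2)
        = (w $ \<sigma> m < w $ \<sigma> j)" .
  qed
  then show ?thesis unfolding kclosest_prob_def hval_def w_def by simp
qed

lemma phi_formula:
  fixes w :: "real^'n"
  assumes inj: "inj_on \<sigma> {..<M}" and injw: "inj_on (\<lambda>j. w $ \<sigma> j) {..<M}" and kM: "k \<le> M" and k1: "1 \<le> k" and M2: "M \<ge> 2"
  shows "(\<Sum>m<M. hval \<epsilon> k M \<sigma> w m * inner w (simplex_vec M \<sigma> m)) =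
     (exp \<epsilon> - 1) / ((real k * exp \<epsilon> + real M - real k) * sqrt (real M * (real M - 1)))
       * (real M * topk_sum k M (\<lambda>j. w $ \<sigma> j) - real k * swf M \<sigma> w)"
proof -
  define q where "q = sqrt (real M * (real M - 1))"
  define D where "D = real k * exp \<epsilon> + real M - real k"
  have qpos: "q > 0" unfolding q_def using M2 by simp
  have "real k * exp \<epsilon> > 0" using k1 by simp
  then have Dpos: "D > 0" unfolding D_def using kM by linarith
  define a where "a m = (real M * w $ \<sigma> m - swf M \<sigma> w) / q" for m
  define T where "T = {m\<in>{..<M}. card {j\<in>{..<M}. w $ \<sigma> m < w $ \<sigma> j} < k}"
  note tk = topk_lemma[OF injw kM]
  have cT: "card T = k" and tT: "topk_sum k M (\<lambda>j. w $ \<sigma> j) = (\<Sum>m\<in>T. w $ \<sigma> m)"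
    using tk unfolding T_def by auto
  have Tsub: "T \<subseteq> {..<M}" unfolding T_def by auto
  have "(\<Sum>m<M. hval \<epsilon> k M \<sigma> w m * inner w (simplex_vec M \<sigma> m)) =
      (\<Sum>m<M. a m / D + (if m \<in> T then (exp \<epsilon> - 1) / D * a m else 0))"
  proof (intro sum.cong refl)
    fix m assume m: "m \<in> {..<M}"
    show "hval \<epsilon> k M \<sigma> w m * inner w (simplex_vec M \<sigma> m) = a m / D + (if m \<in> T then (exp \<epsilon> - 1) / D * a m else 0)"
    proof -
      have iw: "inner w (simplex_vec M \<sigma> m) = a m" using simplex_inner[OF inj, of m w] m unfolding a_def q_def by simp
      have e1: "x / D * a m = a m / D + (x - 1) / D * a m" for x
        by (cases "D = 0") (auto simp: field_simps)
      have mT: "(m \<in> T) = (card {j\<in>{..<M}. w $ \<sigma> m < w $ \<sigma> j} < k)" using m unfolding T_def by simp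
      show ?thesis
      proof (cases "m \<in> T")
        case True
        then have "hval \<epsilon> k M \<sigma> w m = exp \<epsilon> / D" using mT unfolding hval_def D_def by simp
        then show ?thesis using iw e1[of "exp \<epsilon>"] True by simp
      next
        case False
        then have "hval \<epsilon> k M \<sigma> w m = 1 / D" using mT unfolding hval_def D_def by simp
        then show ?thesis using iw False by simp
      qed
    qed
  qed
  also have "\<dots> = (\<Sum>m<M. a m) / D + (\<Sum>m<M. if m \<in> T then (exp \<epsilon> - 1) / D * a m else 0)"
    by (simp only: sum.distrib sum_divide_distrib)
  also have "(\<Sum>m<M. if m \<in> T then (exp \<epsilon> - 1) / D * a m else 0) = (\<Sum>m\<in>T. (exp \<epsilon> - 1) / D * a m)"
    using sum.inter_restrict[of "{..<M}" "\<lambda>m. (exp \<epsilon> - 1) / D * a m" T] Tsub by (simp add: Int_absorb1)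
  also have "(\<Sum>m<M. a m) = 0"
  proof -
    have "(\<Sum>m<M. a m) = (real M * swf M \<sigma> w - real M * swf M \<sigma> w) / q"
      unfolding a_def swf_def by (simp add: sum_divide_distrib[symmetric] sum_subtractf sum_distrib_left)
    then show ?thesis by simp
  qed
  also have "(\<Sum>m\<in>T. (exp \<epsilon> - 1) / D * a m) = (exp \<epsilon> - 1) / D * ((real M * (\<Sum>m\<in>T. w $ \<sigma> m) - real k * swf M \<sigma> w) / q)"
  proof -
    define c where "c = (exp \<epsilon> - 1) / D / q"
    have "(\<Sum>m\<in>T. (exp \<epsilon> - 1) / D * a m) = (\<Sum>m\<in>T. (c * real M) * w $ \<sigma> m - c * swf M \<sigma> w)"
      unfolding a_def c_def using qpos Dpos by (intro sum.cong refl) (simp add: field_simps)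
    also have "\<dots> = (c * real M) * (\<Sum>m\<in>T. w $ \<sigma> m) - real (card T) * (c * swf M \<sigma> w)"
      by (simp only: sum_subtractf sum_distrib_left[symmetric] sum_constant) (simp add: of_nat_def)
    also have "\<dots> = (exp \<epsilon> - 1) / D * ((real M * (\<Sum>m\<in>T. w $ \<sigma> m) - real k * swf M \<sigma> w) / q)"
      unfolding c_def cT using qpos Dpos by (simp add: field_simps)
    finally show ?thesis .
  qed
  finally have "(\<Sum>m<M. hval \<epsilon> k M \<sigma> w m * inner w (simplex_vec M \<sigma> m)) =
      (exp \<epsilon> - 1) / (D * q) * (real M * (\<Sum>m\<in>T. w $ \<sigma> m) - real k * swf M \<sigma> w)"
    by simp
  then show ?thesis unfolding q_def D_def tT .
qed

lemma real_card_filter: "real (card {j\<in>{..<(M::nat)}. P j}) = (\<Sum>j<M. if P j then 1 else 0)"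
proof -
  have "(\<Sum>j<M. if P j then 1 else 0 :: real) = (\<Sum>j\<in>{j\<in>{..<M}. P j}. 1)"
    using sum.inter_filter[OF finite_lessThan, where g="\<lambda>_. 1::real" and P=P] by simp
  then show ?thesis by simp
qed

lemma card_meas:
  fixes g :: "nat \<Rightarrow> 'a \<Rightarrow> real"
  assumes g: "\<And>j. g j \<in> borel_measurable N"
  shows "(\<lambda>x. if card {j\<in>{..<M}. g j x < g m x} < k then a else (b::real)) \<in> borel_measurable N"
proof -
  have f: "(\<lambda>x. (\<Sum>j<M. if g j x < g m x then 1 else 0 :: real)) \<in> borel_measurable N"
  proof (rule borel_measurable_sum)
    fix j show "(\<lambda>x. if g j x < g m x then 1 else 0 :: real) \<in> borel_measurable N"
      by (rule measurable_If) (auto intro: borel_measurable_less g)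
  qed
  have "(\<lambda>x. if (\<Sum>j<M. if g j x < g m x then 1 else 0 :: real) < real k then a else b) \<in> borel_measurable N"
    by (rule measurable_If) (auto intro: borel_measurable_less f)
  moreover have "(card {j\<in>{..<M}. g j x < g m x} < k) = ((\<Sum>j<M. if g j x < g m x then 1 else 0 :: real) < real k)" for x
  proof -
    have e: "real (card {j\<in>{..<M}. g j x < g m x}) = (\<Sum>j<M. if g j x < g m x then 1 else 0 :: real)"
      by (rule real_card_filter)
    have "(card {j\<in>{..<M}. g j x < g m x} < k) = (real (card {j\<in>{..<M}. g j x < g m x}) < real k)"
      by (rule of_nat_less_iff[symmetric])
    also have "\<dots> = ((\<Sum>j<M. if g j x < g m x then 1 else 0 :: real) < real k)"
      by (simp only: e)
    finally show ?thesis .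
  qed
  ultimately show ?thesis by simp
qed

lemma cont_mv: "continuous_on UNIV (\<lambda>A::real^'n^'m. A *v x)"
  unfolding matrix_vector_mult_def by (intro continuous_intros)

lemma meas_mv: "(\<lambda>A::real^'n^'m. A *v x) \<in> borel_measurable borel"
  by (rule borel_measurable_continuous_onI[OF cont_mv])

lemma kprob_meas:
  fixes v :: "real^'n" and S :: "nat \<Rightarrow> real^'n"
  shows "(\<lambda>A::real^'n^'n. kclosest_prob \<epsilon> k M (\<lambda>j. r *\<^sub>R (A *v S j)) v m) \<in> borel_measurable borel"
  unfolding kclosest_prob_def
  by (rule card_meas) (intro borel_measurable_continuous_onI continuous_intros cont_mv)

lemma F_meas:
  fixes v :: "real^'n" and S :: "nat \<Rightarrow> real^'n"
  shows "(\<lambda>A::real^'n^'n. \<Sum>m<M. kclosest_prob \<epsilon> k M (\<lambda>j. r *\<^sub>R (A *v S j)) v m *\<^sub>R (r *\<^sub>R (A *v S m)))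
     \<in> borel_measurable borel"
proof -
  have [measurable]: "(\<lambda>A::real^'n^'n. kclosest_prob \<epsilon> k M (\<lambda>j. r *\<^sub>R (A *v S j)) v m) \<in> borel_measurable borel" for m
    by (rule kprob_meas)
  have [measurable]: "(\<lambda>A::real^'n^'n. A *v S m) \<in> borel_measurable borel" for m by (rule meas_mv)
  show ?thesis by measurable
qed

lemma orth_from_map:
  fixes f :: "real^'n \<Rightarrow> real^'n"
  assumes lin: "linear f" and nrm: "\<And>x. norm (f x) = norm x"
  obtains Q :: "real^'n^'n" where "orthogonal_matrix Q" "\<And>x. Q *v x = f x"
proof
  have ot: "orthogonal_transformation f" using lin nrm by (simp add: orthogonal_transformation)
  show "orthogonal_matrix (matrix f)" using ot orthogonal_transformation_matrix by blast
  have lin': "Vector_Spaces.linear (*s) (*s) f" using lin by (simp add: linear_def scalar_mult_eq_scaleR)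
  show "matrix f *v x = f x" for x using matrix_works[OF lin'] by simp
qed

lemma refl_exists:
  fixes u :: "real^'n"
  assumes u: "norm u = 1"
  obtains Q :: "real^'n^'n" where "orthogonal_matrix Q" "\<And>x. Q *v x = x - (2 * inner u x) *\<^sub>R u"
proof -
  define f where "f x = x - (2 * inner u x) *\<^sub>R u" for x :: "real^'n"
  have lin: "linear f" unfolding f_def
    by (rule linearI) (auto simp: inner_add_right inner_scaleR_right algebra_simps scaleR_add_left)
  have uu: "inner u u = 1" using u by (simp add: norm_eq_1)
  have "inner (f x) (f x) = inner x x" for x
    unfolding f_def using uu by (simp add: inner_diff_left inner_diff_right inner_commute algebra_simps power2_eq_square)
  then have "norm (f x) = norm x" for x by (simp add: norm_eq_sqrt_inner)
  then obtain Q where "orthogonal_matrix Q" "\<And>x. Q *v x = f x" using orth_from_map[OF lin] by blast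
  then show ?thesis using that unfolding f_def by blast
qed

lemma neg_exists:
  obtains Q :: "real^'n^'n" where "orthogonal_matrix Q" "\<And>x. Q *v x = - x"
proof -
  have lin: "linear (\<lambda>x::real^'n. - x)" by (rule linearI) auto
  show ?thesis using orth_from_map[OF lin] that by auto
qed

lemma card_meas':
  fixes g :: "nat \<Rightarrow> 'a \<Rightarrow> real"
  assumes g: "\<And>j. g j \<in> borel_measurable N"
  shows "(\<lambda>x. if card {j\<in>{..<M}. g m x < g j x} < k then a else (b::real)) \<in> borel_measurable N"
proof -
  have g': "(\<lambda>x. - g j x) \<in> borel_measurable N" for j using g by simp
  have "(\<lambda>x. if card {j\<in>{..<M}. - g j x < - g m x} < k then a else (b::real)) \<in> borel_measurable N"
    by (rule card_meas[OF g'])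
  then show ?thesis by (simp only: neg_less_iff_less)
qed

lemma hval_meas:
  "(\<lambda>w::real^'n. hval \<epsilon> k M \<sigma> w m) \<in> borel_measurable borel"
  unfolding hval_def
  by (rule card_meas') (intro borel_measurable_continuous_onI continuous_intros)

lemma D_facts:
  assumes "\<epsilon> > 0" "1 \<le> k" "k \<le> M"
  shows "exp \<epsilon> / (real k * exp \<epsilon> + real M - real k) \<le> 1" "1 / (real k * exp \<epsilon> + real M - real k) \<le> 1"
    "0 \<le> exp \<epsilon> / (real k * exp \<epsilon> + real M - real k)" "0 \<le> 1 / (real k * exp \<epsilon> + real M - real k)"
proof -
  define D where "D = real k * exp \<epsilon> + real M - real k"
  have e1: "exp \<epsilon> > 1" using assms by simp
  have "real k * exp \<epsilon> \<ge> exp \<epsilon>" using assms by simp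
  then have D: "D \<ge> exp \<epsilon>" unfolding D_def using assms by linarith
  then have Dp: "D > 0" using e1 by linarith
  show "exp \<epsilon> / D \<le> 1" using D Dp by (simp add: divide_le_eq_1_pos)
  have "1 \<le> D" using D e1 by linarith
  then show "1 / D \<le> 1" using Dp by (simp add: divide_le_eq_1_pos)
  show "0 \<le> exp \<epsilon> / D" "0 \<le> 1 / D" using Dp by simp_all
qed

lemma hval_bound:
  assumes "\<epsilon> > 0" "1 \<le> k" "k \<le> M"
  shows "0 \<le> hval \<epsilon> k M \<sigma> w m \<and> hval \<epsilon> k M \<sigma> w m \<le> 1"
  using D_facts[OF assms] unfolding hval_def by auto

lemma kprob_bound:
  assumes "\<epsilon> > 0" "1 \<le> k" "k \<le> M"
  shows "0 \<le> kclosest_prob \<epsilon> k M U v m \<and> kclosest_prob \<epsilon> k M U v m \<le> 1"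
  using D_facts[OF assms] unfolding kclosest_prob_def by auto

definition Fv :: "real \<Rightarrow> nat \<Rightarrow> nat \<Rightarrow> (nat \<Rightarrow> 'n) \<Rightarrow> real \<Rightarrow> real^'n \<Rightarrow> real^'n^'n \<Rightarrow> real^'n" where
  "Fv \<epsilon> k M \<sigma> r v A = (\<Sum>m<M. kclosest_prob \<epsilon> k M (\<lambda>j. r *\<^sub>R (A *v simplex_vec M \<sigma> j)) v m
        *\<^sub>R (r *\<^sub>R (A *v simplex_vec M \<sigma> m)))"

lemma Fv_meas: "Fv \<epsilon> k M \<sigma> r v \<in> borel_measurable borel"
  unfolding Fv_def by (rule F_meas)

lemma kprob_Q:
  fixes Q A :: "real^'n^'n"
  assumes Q: "orthogonal_matrix Q" and Qv: "Q *v v = v"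
  shows "kclosest_prob \<epsilon> k M (\<lambda>j. r *\<^sub>R ((Q ** A) *v S j)) v m = kclosest_prob \<epsilon> k M (\<lambda>j. r *\<^sub>R (A *v S j)) v m"
proof -
  have "norm (v - r *\<^sub>R ((Q ** A) *v S j)) = norm (v - r *\<^sub>R (A *v S j))" for j
  proof -
    have "v - r *\<^sub>R ((Q ** A) *v S j) = Q *v (v - r *\<^sub>R (A *v S j))"
      using Qv by (simp add: matrix_vector_mul_assoc[symmetric] matrix_vector_mult_diff_distrib matrix_vector_mult_scaleR)
    then show ?thesis using orth_norm[OF Q] by simp
  qed
  then show ?thesis unfolding kclosest_prob_def by simp
qed

lemma symm_zero:
  fixes \<mu> :: "(real^'n^'n) measure"
  assumes hm: "haar_orthogonal \<mu>" and u: "norm u = 1" and uv: "inner u v = 0"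
  shows "(\<integral>A. inner u (Fv \<epsilon> k M \<sigma> r v A) \<partial>\<mu>) = 0"
proof -
  note hb = haar_basic[OF hm]
  obtain Q :: "real^'n^'n" where Q: "orthogonal_matrix Q" "\<And>x. Q *v x = x - (2 * inner u x) *\<^sub>R u"
    using refl_exists[OF u] by blast
  have uu: "inner u u = 1" using u by (simp add: norm_eq_1)
  have Qv: "Q *v v = v" using Q(2) uv by simp
  have iQ: "inner u (Q *v y) = - inner u y" for y using Q(2) uu by (simp add: inner_diff_right)
  have key: "inner u (Fv \<epsilon> k M \<sigma> r v (Q ** A)) = - inner u (Fv \<epsilon> k M \<sigma> r v A)" for A
  proof -
    have "inner u (Fv \<epsilon> k M \<sigma> r v (Q ** A)) = (\<Sum>m<M. kclosest_prob \<epsilon> k M (\<lambda>j. r *\<^sub>R (A *v simplex_vec M \<sigma> j)) v m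
        * (r * inner u (Q *v (A *v simplex_vec M \<sigma> m))))"
      unfolding Fv_def kprob_Q[OF Q(1) Qv]
      by (simp add: inner_sum_right matrix_vector_mul_assoc[symmetric] mult.assoc)
    also have "\<dots> = - (\<Sum>m<M. kclosest_prob \<epsilon> k M (\<lambda>j. r *\<^sub>R (A *v simplex_vec M \<sigma> j)) v m
        * (r * inner u (A *v simplex_vec M \<sigma> m)))"
      unfolding iQ by (simp add: sum_negf[symmetric])
    also have "\<dots> = - inner u (Fv \<epsilon> k M \<sigma> r v A)"
      unfolding Fv_def by (simp add: inner_sum_right mult.assoc)
    finally show ?thesis .
  qed
  have mQ: "(\<lambda>A. Q ** A) \<in> measurable \<mu> borel"
    by (rule meas_borel_cong[OF hb(2)]) (rule borel_measurable_continuous_onI[OF cont_mmul])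
  have mg: "(\<lambda>A. inner u (Fv \<epsilon> k M \<sigma> r v A)) \<in> borel_measurable borel"
    using Fv_meas by (intro borel_measurable_inner) auto
  have "(\<integral>A. inner u (Fv \<epsilon> k M \<sigma> r v A) \<partial>\<mu>) = integral\<^sup>L (distr \<mu> borel (\<lambda>A. Q ** A)) (\<lambda>A. inner u (Fv \<epsilon> k M \<sigma> r v A))"
    using hb(5)[OF Q(1)] by simp
  also have "\<dots> = (\<integral>A. inner u (Fv \<epsilon> k M \<sigma> r v (Q ** A)) \<partial>\<mu>)"
    by (rule integral_distr[OF mQ mg])
  also have "\<dots> = - (\<integral>A. inner u (Fv \<epsilon> k M \<sigma> r v A) \<partial>\<mu>)"
    unfolding key by simp
  finally show ?thesis by simp
qed

lemma Fv_integrable: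
  fixes \<mu> :: "(real^'n^'n) measure"
  assumes hm: "haar_orthogonal \<mu>" and inj: "inj_on \<sigma> {..<M}" and M2: "M \<ge> 2"
    and eps: "\<epsilon> > 0" and k1: "1 \<le> k" and kM: "k \<le> M"
  shows "integrable \<mu> (Fv \<epsilon> k M \<sigma> r v)"
proof -
  note hb = haar_basic[OF hm]
  interpret prob_space \<mu> by (rule hb(1))
  have bnd: "norm (Fv \<epsilon> k M \<sigma> r v A) \<le> real M * \<bar>r\<bar>" if A: "orthogonal_matrix A" for A
  proof -
    have "norm (Fv \<epsilon> k M \<sigma> r v A) \<le> (\<Sum>m<M. norm (kclosest_prob \<epsilon> k M (\<lambda>j. r *\<^sub>R (A *v simplex_vec M \<sigma> j)) v m
        *\<^sub>R (r *\<^sub>R (A *v simplex_vec M \<sigma> m))))"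
      unfolding Fv_def by (rule norm_sum)
    also have "\<dots> \<le> (\<Sum>m<M. \<bar>r\<bar>)"
    proof (rule sum_mono)
      fix m assume m: "m \<in> {..<M}"
      have n1: "norm (A *v simplex_vec M \<sigma> m) = 1" using orth_norm[OF A] simplex_norm[OF inj _ M2] m by simp
      have p: "0 \<le> kclosest_prob \<epsilon> k M (\<lambda>j. r *\<^sub>R (A *v simplex_vec M \<sigma> j)) v m"
        "kclosest_prob \<epsilon> k M (\<lambda>j. r *\<^sub>R (A *v simplex_vec M \<sigma> j)) v m \<le> 1"
        using kprob_bound[OF eps k1 kM] by auto
      show "norm (kclosest_prob \<epsilon> k M (\<lambda>j. r *\<^sub>R (A *v simplex_vec M \<sigma> j)) v m
        *\<^sub>R (r *\<^sub>R (A *v simplex_vec M \<sigma> m))) \<le> \<bar>r\<bar>"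
        using p n1 by (simp add: mult_le_cancel_right1 mult_left_le_one_le abs_mult)
    qed
    finally show ?thesis by simp
  qed
  show ?thesis
  proof (rule integrable_const_bound[where B="real M * \<bar>r\<bar>"])
    show "AE A in \<mu>. norm (Fv \<epsilon> k M \<sigma> r v A) \<le> real M * \<bar>r\<bar>" using hb(4) bnd by auto
    show "Fv \<epsilon> k M \<sigma> r v \<in> borel_measurable \<mu>" by (rule meas_borel_cong[OF hb(2) Fv_meas])
  qed
qed

lemma nu_ae_sphere:
  fixes \<nu> :: "(real^'n) measure"
  assumes us: "uniform_sphere \<nu>"
  shows "AE w in \<nu>. norm w = 1"
proof -
  note ub = us_basic[OF us]
  interpret prob_space \<nu> by (rule ub(1))
  have "prob (sphere 0 1) = 1" using ub(4) by (simp add: emeasure_eq_measure)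
  then have "AE x in \<nu>. x \<in> sphere 0 1" by (rule AE_prob_1)
  then show ?thesis by simp
qed

lemma nu_ae_inj:
  fixes \<nu> :: "(real^'n) measure" and \<sigma> :: "nat \<Rightarrow> 'n"
  assumes us: "uniform_sphere \<nu>" and inj: "inj_on \<sigma> {..<M}"
  shows "AE w in \<nu>. inj_on (\<lambda>j. w $ \<sigma> j) {..<M}"
proof -
  have "AE w in \<nu>. \<forall>i\<in>{..<M}. \<forall>j\<in>{..<M}. i \<noteq> j \<longrightarrow> w $ \<sigma> i \<noteq> w $ \<sigma> j"
  proof (intro AE_finite_allI finite_lessThan)
    fix i j assume ij: "i \<in> {..<M}" "j \<in> {..<M}"
    show "AE w in \<nu>. i \<noteq> j \<longrightarrow> w $ \<sigma> i \<noteq> w $ \<sigma> j"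
    proof (cases "i = j")
      case True then show ?thesis by simp
    next
      case False
      then have "\<sigma> i \<noteq> \<sigma> j" using inj ij by (auto dest: inj_onD)
      then have "AE w in \<nu>. w $ \<sigma> i \<noteq> w $ \<sigma> j" by (rule tie_null[OF us])
      then show ?thesis by (rule AE_mp) auto
    qed
  qed
  then show ?thesis by (rule AE_mp) (auto intro!: inj_onI)
qed

lemma nu_coord_meas: "(\<lambda>w::real^'n. w $ j) \<in> borel_measurable borel"
  by (intro borel_measurable_continuous_onI continuous_intros)

lemma nu_coord_int:
  fixes \<nu> :: "(real^'n) measure"
  assumes us: "uniform_sphere \<nu>"
  shows "integrable \<nu> (\<lambda>w. w $ j)"
proof -
  note ub = us_basic[OF us]
  interpret prob_space \<nu> by (rule ub(1))
  show ?thesis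
  proof (rule integrable_const_bound[where B=1])
    show "AE w in \<nu>. norm (w $ j) \<le> 1" using nu_ae_sphere[OF us]
      by (rule AE_mp) (auto intro!: AE_I2 simp: component_le_norm_cart[of _ j, THEN order_trans])
    show "(\<lambda>w. w $ j) \<in> borel_measurable \<nu>" by (rule meas_borel_cong[OF ub(2) nu_coord_meas])
  qed
qed

lemma nu_coord_zero:
  fixes \<nu> :: "(real^'n) measure"
  assumes us: "uniform_sphere \<nu>"
  shows "(\<integral>w. w $ j \<partial>\<nu>) = 0"
proof -
  note ub = us_basic[OF us]
  obtain Q :: "real^'n^'n" where Q: "orthogonal_matrix Q" "\<And>x. Q *v x = - x" using neg_exists by blast
  have mQ: "(\<lambda>x. Q *v x) \<in> measurable \<nu> borel"
    by (rule meas_borel_cong[OF ub(2)]) (intro borel_measurable_continuous_onI continuous_intros)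
  have "(\<integral>w. w $ j \<partial>\<nu>) = integral\<^sup>L (distr \<nu> borel (\<lambda>x. Q *v x)) (\<lambda>w. w $ j)"
    using ub(5)[OF Q(1)] by simp
  also have "\<dots> = (\<integral>w. (Q *v w) $ j \<partial>\<nu>)" by (rule integral_distr[OF mQ nu_coord_meas])
  also have "\<dots> = - (\<integral>w. w $ j \<partial>\<nu>)" using Q(2) by simp
  finally show ?thesis by simp
qed

lemma swf_int:
  fixes \<nu> :: "(real^'n) measure"
  assumes us: "uniform_sphere \<nu>"
  shows "integrable \<nu> (swf M \<sigma>)" "integral\<^sup>L \<nu> (swf M \<sigma>) = 0"
proof -
  have e: "swf M \<sigma> = (\<lambda>w. \<Sum>l<M. w $ \<sigma> l)" unfolding swf_def by auto
  show "integrable \<nu> (swf M \<sigma>)" unfolding e using nu_coord_int[OF us] by auto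
  show "integral\<^sup>L \<nu> (swf M \<sigma>) = 0" unfolding e
    using nu_coord_int[OF us] nu_coord_zero[OF us] by (simp add: integral_sum)
qed

lemma swf_meas: "swf M \<sigma> \<in> borel_measurable borel"
proof -
  have e: "swf M \<sigma> = (\<lambda>w. \<Sum>l<M. w $ \<sigma> l)" unfolding swf_def by auto
  show ?thesis unfolding e by (intro borel_measurable_sum nu_coord_meas)
qed

lemma topk_meas: "(\<lambda>w::real^'n. topk_sum k M (\<lambda>j. w $ \<sigma> j)) \<in> borel_measurable borel"
proof -
  define I where "I = {S. S \<subseteq> {..<M} \<and> card S = k}"
  have fI: "finite I" unfolding I_def by (rule finite_subset[of _ "Pow {..<M}"]) auto
  have e: "topk_sum k M (\<lambda>j. w $ \<sigma> j) = Max {(\<lambda>S w. sum (\<lambda>j. w $ \<sigma> j) S) S w | S. S \<in> I}" for w :: "real^'n"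
    unfolding topk_sum_def I_def by simp
  have "(\<lambda>w::real^'n. Max {(\<lambda>S w. sum (\<lambda>j. w $ \<sigma> j) S) S w | S. S \<in> I}) \<in> borel_measurable borel"
    by (rule borel_measurable_Max2[OF fI]) (intro borel_measurable_sum nu_coord_meas)
  then show ?thesis unfolding e .
qed

lemma topk_int:
  fixes \<nu> :: "(real^'n) measure"
  assumes us: "uniform_sphere \<nu>" and inj: "inj_on \<sigma> {..<M}" and kM: "k \<le> M"
  shows "integrable \<nu> (\<lambda>w. topk_sum k M (\<lambda>j. w $ \<sigma> j))"
proof -
  note ub = us_basic[OF us]
  interpret prob_space \<nu> by (rule ub(1))
  have bnd: "\<bar>topk_sum k M (\<lambda>j. w $ \<sigma> j)\<bar> \<le> real M" if w: "norm w = 1" "inj_on (\<lambda>j. w $ \<sigma> j) {..<M}" for w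
  proof -
    define T where "T = {m\<in>{..<M}. card {j\<in>{..<M}. w $ \<sigma> m < w $ \<sigma> j} < k}"
    have tk: "card T = k" "topk_sum k M (\<lambda>j. w $ \<sigma> j) = sum (\<lambda>j. w $ \<sigma> j) T"
      using topk_lemma[OF w(2) kM] unfolding T_def by auto
    have "\<bar>sum (\<lambda>j. w $ \<sigma> j) T\<bar> \<le> sum (\<lambda>j. \<bar>w $ \<sigma> j\<bar>) T" by (rule sum_abs)
    also have "\<dots> \<le> sum (\<lambda>j. 1) T" using w(1) component_le_norm_cart[of w] by (intro sum_mono) auto
    also have "\<dots> = real k" using tk by simp
    finally show ?thesis using tk kM by simp
  qed
  show ?thesis
  proof (rule integrable_const_bound[where B="real M"])
    show "AE w in \<nu>. norm (topk_sum k M (\<lambda>j. w $ \<sigma> j)) \<le> real M"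
      using nu_ae_sphere[OF us] nu_ae_inj[OF us inj] by eventually_elim (simp add: bnd)
    show "(\<lambda>w. topk_sum k M (\<lambda>j. w $ \<sigma> j)) \<in> borel_measurable \<nu>" by (rule meas_borel_cong[OF ub(2) topk_meas])
  qed
qed

definition phi :: "real \<Rightarrow> nat \<Rightarrow> nat \<Rightarrow> (nat \<Rightarrow> 'n) \<Rightarrow> real^'n \<Rightarrow> real" where
  "phi \<epsilon> k M \<sigma> w = (\<Sum>m<M. hval \<epsilon> k M \<sigma> w m * inner w (simplex_vec M \<sigma> m))"

definition psi :: "real \<Rightarrow> nat \<Rightarrow> nat \<Rightarrow> (nat \<Rightarrow> 'n) \<Rightarrow> real^'n \<Rightarrow> real" where
  "psi \<epsilon> k M \<sigma> w = (if norm w \<le> 1 then phi \<epsilon> k M \<sigma> w else 0)"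

lemma phi_meas: "phi \<epsilon> k M \<sigma> \<in> borel_measurable borel"
proof -
  have e: "phi \<epsilon> k M \<sigma> = (\<lambda>w. \<Sum>m<M. hval \<epsilon> k M \<sigma> w m * inner w (simplex_vec M \<sigma> m))"
    unfolding phi_def by auto
  show ?thesis unfolding e
    by (intro borel_measurable_sum borel_measurable_times hval_meas borel_measurable_continuous_onI continuous_intros)
qed

lemma psi_meas: "psi \<epsilon> k M \<sigma> \<in> borel_measurable borel"
proof -
  have e: "psi \<epsilon> k M \<sigma> = (\<lambda>w. if norm w \<le> 1 then phi \<epsilon> k M \<sigma> w else 0)"
    unfolding psi_def by auto
  show ?thesis unfolding e
    by (rule measurable_If) (auto intro: phi_meas borel_measurable_le borel_measurable_continuous_onI continuous_intros)
qed

lemma psi_bound: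
  fixes \<sigma> :: "nat \<Rightarrow> 'n::finite"
  assumes inj: "inj_on \<sigma> {..<M}" and M2: "M \<ge> 2" and eps: "\<epsilon> > 0" and k1: "1 \<le> k" and kM: "k \<le> M"
  shows "\<bar>psi \<epsilon> k M \<sigma> w\<bar> \<le> real M"
proof (cases "norm w \<le> 1")
  case True
  have "\<bar>phi \<epsilon> k M \<sigma> w\<bar> \<le> (\<Sum>m<M. \<bar>hval \<epsilon> k M \<sigma> w m * inner w (simplex_vec M \<sigma> m)\<bar>)"
    unfolding phi_def by (rule sum_abs)
  also have "\<dots> \<le> (\<Sum>m<M. 1)"
  proof (rule sum_mono)
    fix m assume m: "m \<in> {..<M}"
    have h: "0 \<le> hval \<epsilon> k M \<sigma> w m" "hval \<epsilon> k M \<sigma> w m \<le> 1" using hval_bound[OF eps k1 kM] by auto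
    have "\<bar>inner w (simplex_vec M \<sigma> m)\<bar> \<le> norm w * norm (simplex_vec M \<sigma> m)" by (rule Cauchy_Schwarz_ineq2)
    also have "\<dots> \<le> 1" using True simplex_norm[OF inj _ M2] m by simp
    finally have i: "\<bar>inner w (simplex_vec M \<sigma> m)\<bar> \<le> 1" .
    show "\<bar>hval \<epsilon> k M \<sigma> w m * inner w (simplex_vec M \<sigma> m)\<bar> \<le> 1"
      using h i by (simp add: abs_mult mult_le_one)
  qed
  finally show ?thesis using True unfolding psi_def by simp
next
  case False then show ?thesis unfolding psi_def by simp
qed

lemma inner_v_F:
  fixes A :: "real^'n^'n" and \<sigma> :: "nat \<Rightarrow> 'n::finite"
  assumes A: "orthogonal_matrix A" and v: "norm v = 1" and r: "r > 0"
    and inj: "inj_on \<sigma> {..<M}" and M2: "M \<ge> 2"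
  shows "inner v (Fv \<epsilon> k M \<sigma> r v A) = r * psi \<epsilon> k M \<sigma> (v v* A)"
proof -
  have nA: "norm (v v* A) = 1" using orth_norm[of "transpose A" v] A v by simp
  have "inner v (Fv \<epsilon> k M \<sigma> r v A) = (\<Sum>m<M. kclosest_prob \<epsilon> k M (\<lambda>j. r *\<^sub>R (A *v simplex_vec M \<sigma> j)) v m
        * (r * inner (v v* A) (simplex_vec M \<sigma> m)))"
    unfolding Fv_def by (simp add: inner_sum_right dot_lmul_matrix mult.assoc)
  also have "\<dots> = (\<Sum>m<M. hval \<epsilon> k M \<sigma> (v v* A) m * (r * inner (v v* A) (simplex_vec M \<sigma> m)))"
    by (intro sum.cong refl) (simp add: kprob_eq[OF A v r inj M2])
  also have "\<dots> = r * phi \<epsilon> k M \<sigma> (v v* A)"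
    unfolding phi_def by (simp add: sum_distrib_left algebra_simps)
  finally show ?thesis using nA unfolding psi_def by simp
qed

lemma vcomp:
  fixes \<mu> :: "(real^'n^'n) measure" and \<nu> :: "(real^'n) measure" and \<sigma> :: "nat \<Rightarrow> 'n"
  assumes hm: "haar_orthogonal \<mu>" and us: "uniform_sphere \<nu>" and inj: "inj_on \<sigma> {..<M}"
    and M2: "M \<ge> 2" and eps: "\<epsilon> > 0" and k1: "1 \<le> k" and kM: "k \<le> M" and r: "r > 0" and v: "norm v = 1"
  shows "(\<integral>A. inner v (Fv \<epsilon> k M \<sigma> r v A) \<partial>\<mu>) =
    r * ((exp \<epsilon> - 1) / ((real k * exp \<epsilon> + real M - real k) * sqrt (real M * (real M - 1)))
       * (real M * (\<integral>w. topk_sum k M (\<lambda>j. w $ \<sigma> j) \<partial>\<nu>)))"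
proof -
  note hb = haar_basic[OF hm]
  note ub = us_basic[OF us]
  define c where "c = (exp \<epsilon> - 1) / ((real k * exp \<epsilon> + real M - real k) * sqrt (real M * (real M - 1)))"
  have mpsiA: "(\<lambda>A. psi \<epsilon> k M \<sigma> (v v* A)) \<in> borel_measurable borel"
    using borel_measurable_continuous_onI[OF cont_vmul1] psi_meas by (rule measurable_compose)
  have s1: "(\<integral>A. inner v (Fv \<epsilon> k M \<sigma> r v A) \<partial>\<mu>) = (\<integral>A. r * psi \<epsilon> k M \<sigma> (v v* A) \<partial>\<mu>)"
  proof (rule integral_cong_AE)
    show "(\<lambda>A. inner v (Fv \<epsilon> k M \<sigma> r v A)) \<in> borel_measurable \<mu>"
      by (rule meas_borel_cong[OF hb(2)]) (intro borel_measurable_inner borel_measurable_const Fv_meas)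
    show "(\<lambda>A. r * psi \<epsilon> k M \<sigma> (v v* A)) \<in> borel_measurable \<mu>"
      by (rule meas_borel_cong[OF hb(2)]) (intro borel_measurable_times borel_measurable_const mpsiA)
    show "AE A in \<mu>. inner v (Fv \<epsilon> k M \<sigma> r v A) = r * psi \<epsilon> k M \<sigma> (v v* A)"
      using hb(4) by (rule AE_mp) (auto intro!: AE_I2 inner_v_F[OF _ v r inj M2])
  qed
  have s3: "(\<integral>A. psi \<epsilon> k M \<sigma> (v v* A) \<partial>\<mu>) = integral\<^sup>L \<nu> (psi \<epsilon> k M \<sigma>)"
    by (rule transfer[OF hm us psi_meas psi_bound[OF inj M2 eps k1 kM] v])
  have s4: "integral\<^sup>L \<nu> (psi \<epsilon> k M \<sigma>) =
      (\<integral>w. c * (real M * topk_sum k M (\<lambda>j. w $ \<sigma> j) - real k * swf M \<sigma> w) \<partial>\<nu>)"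
  proof (rule integral_cong_AE)
    show "psi \<epsilon> k M \<sigma> \<in> borel_measurable \<nu>" by (rule meas_borel_cong[OF ub(2) psi_meas])
    show "(\<lambda>w. c * (real M * topk_sum k M (\<lambda>j. w $ \<sigma> j) - real k * swf M \<sigma> w)) \<in> borel_measurable \<nu>"
      by (rule meas_borel_cong[OF ub(2)])
        (intro borel_measurable_times borel_measurable_diff borel_measurable_const topk_meas swf_meas)
    show "AE w in \<nu>. psi \<epsilon> k M \<sigma> w = c * (real M * topk_sum k M (\<lambda>j. w $ \<sigma> j) - real k * swf M \<sigma> w)"
      using nu_ae_sphere[OF us] nu_ae_inj[OF us inj]
      by eventually_elim (simp add: psi_def phi_def c_def phi_formula[OF inj _ kM k1 M2])
  qed
  have s5: "(\<integral>w. c * (real M * topk_sum k M (\<lambda>j. w $ \<sigma> j) - real k * swf M \<sigma> w) \<partial>\<nu>)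
      = c * (real M * (\<integral>w. topk_sum k M (\<lambda>j. w $ \<sigma> j) \<partial>\<nu>))"
  proof -
    have i1: "integrable \<nu> (\<lambda>w. real M * topk_sum k M (\<lambda>j. w $ \<sigma> j))"
      using topk_int[OF us inj kM] by simp
    have i2: "integrable \<nu> (\<lambda>w. real k * swf M \<sigma> w)" using swf_int(1)[OF us] by simp
    have "(\<integral>w. c * (real M * topk_sum k M (\<lambda>j. w $ \<sigma> j) - real k * swf M \<sigma> w) \<partial>\<nu>)
        = c * (\<integral>w. (real M * topk_sum k M (\<lambda>j. w $ \<sigma> j) - real k * swf M \<sigma> w) \<partial>\<nu>)"
      by (rule integral_mult_right_zero)
    also have "(\<integral>w. (real M * topk_sum k M (\<lambda>j. w $ \<sigma> j) - real k * swf M \<sigma> w) \<partial>\<nu>)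
        = (\<integral>w. real M * topk_sum k M (\<lambda>j. w $ \<sigma> j) \<partial>\<nu>) - (\<integral>w. real k * swf M \<sigma> w \<partial>\<nu>)"
      by (rule Bochner_Integration.integral_diff[OF i1 i2])
    also have "(\<integral>w. real k * swf M \<sigma> w \<partial>\<nu>) = 0"
      using swf_int(2)[OF us] by simp
    also have "(\<integral>w. real M * topk_sum k M (\<lambda>j. w $ \<sigma> j) \<partial>\<nu>) = real M * (\<integral>w. topk_sum k M (\<lambda>j. w $ \<sigma> j) \<partial>\<nu>)"
      by (rule integral_mult_right_zero)
    finally show ?thesis by simp
  qed
  have "(\<integral>A. r * psi \<epsilon> k M \<sigma> (v v* A) \<partial>\<mu>) = r * (\<integral>A. psi \<epsilon> k M \<sigma> (v v* A) \<partial>\<mu>)"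
    by (rule integral_mult_right_zero)
  then have "(\<integral>A. inner v (Fv \<epsilon> k M \<sigma> r v A) \<partial>\<mu>) = r * (c * (real M * (\<integral>w. topk_sum k M (\<lambda>j. w $ \<sigma> j) \<partial>\<nu>)))"
    using s1 s3 s4 s5 by simp
  then show ?thesis unfolding c_def .
qed

lemma q_eq:
  assumes "M \<ge> (2::nat)"
  shows "sqrt (real M * (real M - 1)) = real M * sqrt ((real M - 1) / real M)"
proof -
  have eq: "real M * (real M - 1) = (real M)\<^sup>2 * ((real M - 1) / real M)" using assms by (simp add: power2_eq_square field_simps)
  have "sqrt (real M * (real M - 1)) = sqrt ((real M)\<^sup>2 * ((real M - 1) / real M))" using eq by (rule arg_cong)
  also have "\<dots> = sqrt ((real M)\<^sup>2) * sqrt ((real M - 1) / real M)" by (rule real_sqrt_mult)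
  also have "sqrt ((real M)\<^sup>2) = real M" by simp
  finally show ?thesis .
qed

lemma final_alg:
  fixes r C D e q Mr :: real
  assumes r: "r > 0" and D: "D > 0" and e: "e > 1" and q: "q > 0" and Mr: "Mr > 0"
    and qe: "q = Mr * s"
  shows "(r * ((e - 1) / (D * q) * Mr * C) = 1) \<longleftrightarrow> r = D / (e - 1) * s * (1 / C)"
proof (cases "C = 0")
  case True
  then show ?thesis using r by simp
next
  case False
  have h1: "(r * ((e - 1) / (D * q) * Mr * C) = 1) \<longleftrightarrow> (r * (e - 1) * Mr * C = D * q)"
    using D q by (simp add: field_simps) auto
  have a1: "r * (e - 1) * Mr * C = Mr * (r * (e - 1) * C)" "D * q = Mr * (D * s)" unfolding qe by (simp_all add: ac_simps)
  have h2: "(r * (e - 1) * Mr * C = D * q) \<longleftrightarrow> (r * (e - 1) * C = D * s)"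
    unfolding a1 using Mr by simp
  have h3: "(r * (e - 1) * C = D * s) \<longleftrightarrow> (r = D / (e - 1) * s * (1 / C))"
    using e False by (simp add: field_simps)
  show ?thesis using h1 h2 h3 by simp
qed

theorem lemma5:
  fixes \<mu> :: "(real^'n^'n) measure" and \<nu> :: "(real^'n) measure"
    and \<sigma> :: "nat \<Rightarrow> 'n" and d b M k :: nat and \<epsilon> :: real
  assumes "CARD('n) = d" and "b \<ge> 1" and "M = 2 ^ b" and "M < d"
    and "\<epsilon> > 0" and "1 \<le> k" and "k \<le> M"
    and "inj_on \<sigma> {..<M}"
    and "haar_orthogonal \<mu>" and "uniform_sphere \<nu>"
  shows "\<forall>r>0. kclosest_unbiased \<epsilon> k M \<mu> (\<lambda>A m. r *\<^sub>R (A *v simplex_vec M \<sigma> m))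
           \<longleftrightarrow> r = (real k * exp \<epsilon> + real M - real k) / (exp \<epsilon> - 1)
                   * sqrt ((real M - 1) / real M)
                   * (1 / integral\<^sup>L \<nu> (\<lambda>a. topk_sum k M (\<lambda>j. a $ \<sigma> j)))"
proof (intro allI impI)
  fix r :: real assume r: "r > 0"
  have eps: "\<epsilon> > 0" and k1: "1 \<le> k" and kM: "k \<le> M" and inj: "inj_on \<sigma> {..<M}"
    and hm: "haar_orthogonal \<mu>" and us: "uniform_sphere \<nu>" using assms by auto
  have M2: "M \<ge> 2"
  proof -
    have "(2::nat) ^ 1 \<le> 2 ^ b" using assms(2) by (intro power_increasing) auto
    then show ?thesis using assms(3) by simp
  qed
  define C where "C = integral\<^sup>L \<nu> (\<lambda>a. topk_sum k M (\<lambda>j. a $ \<sigma> j))"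
  define D where "D = real k * exp \<epsilon> + real M - real k"
  define q where "q = sqrt (real M * (real M - 1))"
  define K where "K = (exp \<epsilon> - 1) / (D * q) * real M"
  have Epos: "\<And>v. norm v = 1 \<Longrightarrow> integral\<^sup>L \<mu> (Fv \<epsilon> k M \<sigma> r v) = (r * (K * C)) *\<^sub>R v"
  proof -
    fix v :: "real^'n" assume v: "norm v = 1"
    define E where "E = integral\<^sup>L \<mu> (Fv \<epsilon> k M \<sigma> r v)"
    have intF: "integrable \<mu> (Fv \<epsilon> k M \<sigma> r v)" by (rule Fv_integrable[OF hm inj M2 eps k1 kM])
    have iv: "inner v E = r * (K * C)"
    proof -
      have "inner v E = (\<integral>A. inner v (Fv \<epsilon> k M \<sigma> r v A) \<partial>\<mu>)"
        unfolding E_def using intF by (simp add: integral_inner_right)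
      also have "\<dots> = r * (K * C)"
        unfolding vcomp[OF hm us inj M2 eps k1 kM r v] K_def C_def D_def q_def by (simp add: mult.assoc)
      finally show ?thesis .
    qed
    have iu: "inner u E = 0" if u: "norm u = 1" "inner u v = 0" for u
    proof -
      have "inner u E = (\<integral>A. inner u (Fv \<epsilon> k M \<sigma> r v A) \<partial>\<mu>)"
        unfolding E_def using intF by (simp add: integral_inner_right)
      also have "\<dots> = 0" by (rule symm_zero[OF hm u])
      finally show ?thesis .
    qed
    define w where "w = E - (inner v E) *\<^sub>R v"
    have vv: "inner v v = 1" using v by (simp add: norm_eq_1)
    have "inner w v = inner E v - inner v E * inner v v" unfolding w_def by (simp add: inner_diff_left)
    then have wv: "inner w v = 0" using vv by (simp add: inner_commute)
    have "w = 0"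
    proof (rule ccontr)
      assume wn: "w \<noteq> 0"
      define u where "u = w /\<^sub>R norm w"
      have un: "norm u = 1" unfolding u_def using wn by simp
      have uv: "inner u v = 0" unfolding u_def using wv by simp
      have "inner u E = 0" by (rule iu[OF un uv])
      then have wE: "inner w E = 0" unfolding u_def using wn by simp
      have "inner w w = inner w E - inner v E * inner w v" unfolding w_def
        by (simp add: inner_diff_right inner_diff_left inner_commute algebra_simps)
      then have "inner w w = 0" using wE wv by simp
      then show False using wn by simp
    qed
    then have "E = (inner v E) *\<^sub>R v" unfolding w_def by simp
    then show "integral\<^sup>L \<mu> (Fv \<epsilon> k M \<sigma> r v) = (r * (K * C)) *\<^sub>R v" using iv unfolding E_def by simp
  qed
  have Feq: "(\<lambda>A. \<Sum>m<M. kclosest_prob \<epsilon> k M ((\<lambda>A m. r *\<^sub>R (A *v simplex_vec M \<sigma> m)) A) v m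
        *\<^sub>R (\<lambda>A m. r *\<^sub>R (A *v simplex_vec M \<sigma> m)) A m) = Fv \<epsilon> k M \<sigma> r v" for v
    by (rule ext) (simp add: Fv_def)
  have "kclosest_unbiased \<epsilon> k M \<mu> (\<lambda>A m. r *\<^sub>R (A *v simplex_vec M \<sigma> m))
      \<longleftrightarrow> (\<forall>v::real^'n. norm v = 1 \<longrightarrow> (r * (K * C)) *\<^sub>R v = v)"
    unfolding kclosest_unbiased_def Feq using Epos by auto
  also have "\<dots> \<longleftrightarrow> r * (K * C) = 1"
  proof
    assume h: "\<forall>v::real^'n. norm v = 1 \<longrightarrow> (r * (K * C)) *\<^sub>R v = v"
    define v0 :: "real^'n" where "v0 = axis undefined 1"
    have n0: "norm v0 = 1" unfolding v0_def by simp
    then have "v0 \<noteq> 0" by auto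
    moreover have "(r * (K * C)) *\<^sub>R v0 = 1 *\<^sub>R v0" using h n0 by simp
    ultimately show "r * (K * C) = 1" using scaleR_cancel_right[of "r * (K * C)" v0 1] by simp
  qed simp
  also have "\<dots> \<longleftrightarrow> r = D / (exp \<epsilon> - 1) * sqrt ((real M - 1) / real M) * (1 / C)"
  proof -
    have e1: "exp \<epsilon> > 1" using eps by simp
    have "real k * exp \<epsilon> \<ge> exp \<epsilon>" using k1 by simp
    then have Dp: "D > 0" unfolding D_def using kM e1 by linarith
    have qp: "q > 0" unfolding q_def using M2 by simp
    have Mp: "real M > 0" using M2 by simp
    have "(r * (K * C) = 1) = (r * ((exp \<epsilon> - 1) / (D * q) * real M * C) = 1)" unfolding K_def by (simp add: mult.assoc)
    also have "\<dots> = (r = D / (exp \<epsilon> - 1) * sqrt ((real M - 1) / real M) * (1 / C))"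
      by (rule final_alg[OF r Dp e1 qp Mp]) (simp add: q_def q_eq[OF M2])
    finally show ?thesis .
  qed
  finally show "kclosest_unbiased \<epsilon> k M \<mu> (\<lambda>A m. r *\<^sub>R (A *v simplex_vec M \<sigma> m))
           \<longleftrightarrow> r = (real k * exp \<epsilon> + real M - real k) / (exp \<epsilon> - 1)
                   * sqrt ((real M - 1) / real M)
                   * (1 / integral\<^sup>L \<nu> (\<lambda>a. topk_sum k M (\<lambda>j. a $ \<sigma> j)))"
    unfolding C_def D_def .
qed

end
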